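(* For every integer $h \geq 3$ and every positive integer $N$, \[ \psi(N,h,h) \geq \frac{1}{\cos(\pi/h)} \left( \frac{4}{3 - \cos(\pi/h)} - 1 \right). \]
   Context: $[N] = \{1,2,\dots,N\}$. For positive integers $K$ and $h \geq 3$, let $\mathcal{F}_{K,h}$ be the set of all functions $F(x) = \sum_{j=1}^K b_j \cos(jx)$ with real coefficients satisfying $\sum_{j=1}^K |b_j| = \frac{1}{\cos(\pi/h)}$. For nonempty $A \subseteq [N]$ and $F \in \mathcal{F}_{K,h}$ let $w_F(A) = \sum_{a \in A} F\!\left( \left(a - \frac{N+1}{2}\right) \frac{2\pi}{hN} \right)$, and let \[ \psi(N,K,h) = \min_{\emptyset \neq A \subseteq [N]} \sup \left\{ \frac{w_F(A)}{|A|} : F \in \mathcal{F}_{K,h} \right\}. \] *)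

theory Defs
  imports "HOL-Analysis.Analysis"
begin

definition cospoly :: "nat \<Rightarrow> (nat \<Rightarrow> real) \<Rightarrow> real \<Rightarrow> real" where
  "cospoly K b x = (\<Sum>j=1..K. b j * cos (real j * x))"

definition Fam :: "nat \<Rightarrow> nat \<Rightarrow> (real \<Rightarrow> real) set" where
  "Fam K h = {F. \<exists>b::nat \<Rightarrow> real. (\<Sum>j=1..K. \<bar>b j\<bar>) = 1 / cos (pi / real h)
                                  \<and> F = cospoly K b}"

definition wF :: "nat \<Rightarrow> nat \<Rightarrow> (real \<Rightarrow> real) \<Rightarrow> nat set \<Rightarrow> real" where
  "wF N h F A = (\<Sum>a\<in>A. F ((real a - (real N + 1) / 2) * (2 * pi / (real h * real N))))"

definition psi :: "nat \<Rightarrow> nat \<Rightarrow> nat \<Rightarrow> real" where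
  "psi N K h = Min ((\<lambda>A. Sup ((\<lambda>F. wF N h F A / real (card A)) ` Fam K h))
                     ` {A. A \<subseteq> {1..N} \<and> A \<noteq> {}})"

end

theory Submission
  imports Defs
begin


lemma sin_sum_id:
  "2 * sin (real h * p) = 2 * sin p * (\<Sum>k<h. cos ((real h - 1 - 2*real k) * p))"
proof -
  define g where "g k = sin ((real h - 2 * real k) * p)" for k :: nat
  have "(\<Sum>k<h. g k - g (Suc k)) = g 0 - g h" by (rule sum_lessThan_telescope')
  also have "g 0 - g h = 2 * sin (real h * p)" by (simp add: g_def algebra_simps)
  finally have 1: "(\<Sum>k<h. g k - g (Suc k)) = 2 * sin (real h * p)" .
  have "g k - g (Suc k) = 2 * sin p * cos ((real h - 1 - 2*real k) * p)" for k
  proof -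
    have "g k - g (Suc k) = 2 * sin ((((real h - 2 * real k) * p) - ((real h - 2 * real (Suc k)) * p)) / 2)
       * cos ((((real h - 2 * real k) * p) + ((real h - 2 * real (Suc k)) * p)) / 2)"
      unfolding g_def by (rule sin_diff_sin)
    also have "(((real h - 2 * real k) * p) - ((real h - 2 * real (Suc k)) * p)) / 2 = p"
      by (simp add: algebra_simps)
    also have "(((real h - 2 * real k) * p) + ((real h - 2 * real (Suc k)) * p)) / 2 = (real h - 1 - 2*real k) * p"
      by (simp add: field_simps)
    finally show ?thesis .
  qed
  hence "(\<Sum>k<h. g k - g (Suc k)) = 2 * sin p * (\<Sum>k<h. cos ((real h - 1 - 2*real k) * p))"
    by (simp add: sum_distrib_left)
  with 1 show ?thesis by simp
qed

lemma sin_ratio: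
  assumes h: "h \<ge> 1" and p0: "0 \<le> p" and pa: "p \<le> pi / (2 * real h)"
  shows "sin p \<le> sin (pi / (2 * real h)) * sin (real h * p)"
proof -
  define a where "a = pi / (2 * real h)"
  define S where "S q = (\<Sum>k<h. cos ((real h - 1 - 2*real k) * q))" for q
  have hp: "real h > 0" using h by simp
  have a0: "0 < a" using hp by (simp add: a_def)
  have ha: "real h * a = pi/2" using hp by (simp add: a_def)
  have sa: "sin a > 0" using a0 ha hp
    by (intro sin_gt_zero) (auto simp: a_def field_simps)
  have Sa: "sin a * S a = 1"
    using sin_sum_id[of h a] ha by (simp add: S_def)
  have mono: "S a \<le> S p"
    unfolding S_def
  proof (rule sum_mono)
    fix k assume k: "k \<in> {..<h}"
    define m where "m = \<bar>real h - 1 - 2*real k\<bar>"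
    have m1: "m \<le> real h" using k by (auto simp: m_def)
    have ca: "cos (t * q) = cos (\<bar>t\<bar> * q)" for t q :: real
      proof (cases "t \<ge> 0")
        case False
        hence "\<bar>t\<bar> * q = - (t * q)" by simp
        thus ?thesis by (simp only: cos_minus)
      qed simp
    have e1: "cos ((real h - 1 - 2*real k) * a) = cos (m * a)"
      unfolding m_def by (rule ca)
    have e2: "cos ((real h - 1 - 2*real k) * p) = cos (m * p)"
      unfolding m_def by (rule ca)
    have "m * a \<le> real h * a" using m1 a0 by (intro mult_right_mono) auto
    hence "m * a \<le> pi" using ha pi_gt_zero by linarith
    moreover have "m * p \<le> m * a" using pa by (intro mult_left_mono) (auto simp: m_def a_def)
    moreover have "0 \<le> m * p" using p0 by (simp add: m_def)
    ultimately show "cos ((real h - 1 - 2*real k) * a) \<le> cos ((real h - 1 - 2*real k) * p)"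
      unfolding e1 e2 by (intro cos_monotone_0_pi_le) auto
  qed
  have "a \<le> pi" unfolding a_def using h pi_gt_zero
    by (simp add: field_simps)
  hence sp: "sin p \<ge> 0"
    using p0 pa by (intro sin_ge_zero) (auto simp: a_def)
  have "sin p = sin a * (sin p * S a)" using Sa by simp
  also have "\<dots> \<le> sin a * (sin p * S p)"
    using sa sp mono by (intro mult_left_mono) auto
  also have "sin p * S p = sin (real h * p)"
    using sin_sum_id[of h p] by (simp add: S_def)
  finally show ?thesis by (simp add: a_def)
qed

lemma pointwise:
  assumes h: "h \<ge> 1" and th: "\<bar>t\<bar> \<le> pi / real h"
  shows "cos t \<ge> cos (pi / real h) + (1 - cos (pi / real h)) * (1 + cos (real h * t)) / 2"
proof -
  define p where "p = \<bar>t\<bar> / 2"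
  define a where "a = pi / (2 * real h)"
  have p0: "0 \<le> p" by (simp add: p_def)
  have pa: "p \<le> a" using th by (simp add: p_def a_def field_simps)
  have key: "sin p \<le> sin a * sin (real h * p)"
    using sin_ratio[OF h p0] pa by (simp add: a_def)
  have hp: "real h > 0" using h by simp
  have a0: "0 < a" using hp by (simp add: a_def)
  have "a \<le> pi" unfolding a_def using h pi_gt_zero by (simp add: field_simps)
  hence sp: "sin p \<ge> 0" using p0 pa by (intro sin_ge_zero) auto
  have sq: "(sin p)^2 \<le> (sin a * sin (real h * p))^2"
    using key sp by (intro power_mono) auto
  have e1: "cos t = 1 - 2 * (sin p)^2"
    using cos_double_sin[of p] by (simp add: p_def)
  have e2: "cos (pi / real h) = 1 - 2 * (sin a)^2"
    using cos_double_sin[of a] by (simp add: a_def)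
  have "cos (real h * t) = cos \<bar>real h * t\<bar>" by simp
  also have "\<bar>real h * t\<bar> = 2 * (real h * p)" using hp by (simp add: p_def abs_mult)
  finally have e3: "cos (real h * t) = 1 - 2 * (sin (real h * p))^2"
    using cos_double_sin by simp
  show ?thesis unfolding e1 e2 e3 using sq by (simp add: power_mult_distrib algebra_simps) argo
qed


lemma sum_single:
  assumes "k \<in> S" "finite S"
  shows "(\<Sum>j\<in>S. (if j = k then u else 0) * f j) = u * (f k :: real)"
proof -
  have "(\<Sum>j\<in>S. (if j = k then u else 0) * f j) = (\<Sum>j\<in>S. (if j = k then u * f k else 0))"
    by (rule sum.cong) auto
  also have "\<dots> = u * f k" using assms by simp
  finally show ?thesis .
qed

lemma abs_single:
  assumes "k \<in> S" "finite S"
  shows "(\<Sum>j\<in>S. \<bar>if j = k then u else 0\<bar>) = \<bar>u :: real\<bar>"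
proof -
  have "(\<Sum>j\<in>S. \<bar>if j = k then u else 0\<bar>) = (\<Sum>j\<in>S. (if j = k then \<bar>u\<bar> else 0))"
    by (rule sum.cong) auto
  also have "\<dots> = \<bar>u\<bar>" using assms by simp
  finally show ?thesis .
qed

lemma cospoly_bound: "\<bar>cospoly K b x\<bar> \<le> (\<Sum>j=1..K. \<bar>b j\<bar>)"
proof -
  have "\<bar>cospoly K b x\<bar> \<le> (\<Sum>j=1..K. \<bar>b j * cos (real j * x)\<bar>)"
    unfolding cospoly_def by (rule sum_abs)
  also have "\<dots> \<le> (\<Sum>j=1..K. \<bar>b j\<bar>)"
    by (intro sum_mono) (simp add: abs_mult mult_left_le)
  finally show ?thesis .
qed

theorem mainTheorem7:
  fixes N h :: nat
  assumes "h \<ge> 3" and "N \<ge> 1"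
  shows "psi N h h \<ge> (1 / cos (pi / real h)) * (4 / (3 - cos (pi / real h)) - 1)"
proof -
  define c where "c = cos (pi / real h)"
  define T where "T = (1 + c) / (3 - c)"
  have hp: "real h \<ge> 3" using assms(1) by simp
  have c0: "c > 0" unfolding c_def
    using hp pi_gt_zero by (intro cos_gt_zero) (auto simp: field_simps)
  have q0: "0 < pi / real h" using hp pi_gt_zero by simp
  have q1: "pi / real h \<le> pi" using hp pi_gt_zero by (simp add: field_simps)
  have c1: "c < 1" unfolding c_def
    using cos_mono_less_eq[of "pi / real h" 0] q0 q1 by simp
  have rhs: "(1 / c) * (4 / (3 - c) - 1) = T / c"
    using c1 by (simp add: T_def field_simps)
  define xs where "xs a = (real a - (real N + 1) / 2) * (2 * pi / (real h * real N))" for a :: nat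
  have xsb: "\<bar>xs a\<bar> \<le> pi / real h" if a: "a \<in> {1..N}" for a
  proof -
    have "\<bar>real a - (real N + 1) / 2\<bar> \<le> real N / 2"
    proof -
      have "1 \<le> real a" "real a \<le> real N" using a by auto
      thus ?thesis by (simp add: abs_le_iff field_simps)
    qed
    hence "\<bar>real a - (real N + 1) / 2\<bar> * (2 * pi / (real h * real N)) \<le> real N / 2 * (2 * pi / (real h * real N))"
      by (intro mult_right_mono) auto
    also have "\<dots> = pi / real h" using assms by (simp add: field_simps)
    finally show ?thesis unfolding xs_def using pi_gt_zero by (simp add: abs_mult)
  qed
  have main: "T / c \<le> Sup ((\<lambda>F. wF N h F A / real (card A)) ` Fam h h)"
    if A: "A \<subseteq> {1..N}" "A \<noteq> {}" for A
  proof -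
    have fA: "finite A" using A finite_subset by blast
    define n where "n = real (card A)"
    have n0: "n > 0" using fA A by (simp add: n_def card_gt_0_iff)
    have bdd: "bdd_above ((\<lambda>F. wF N h F A / real (card A)) ` Fam h h)"
    proof (rule bdd_aboveI2)
      fix F assume "F \<in> Fam h h"
      then obtain b where b: "(\<Sum>j=1..h. \<bar>b j\<bar>) = 1 / c" "F = cospoly h b"
        unfolding Fam_def c_def by auto
      have "wF N h F A \<le> of_nat (card A) * (1 / c)"
        unfolding wF_def by (rule sum_bounded_above) (use cospoly_bound b in \<open>metis abs_le_D1\<close>)
      thus "wF N h F A / real (card A) \<le> 1 / c"
        using n0 by (simp add: n_def field_simps)
    qed
    define C1 where "C1 = (\<Sum>a\<in>A. cos (xs a))"
    define Ch where "Ch = (\<Sum>a\<in>A. cos (real h * xs a))"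
    have "C1 \<ge> (\<Sum>a\<in>A. c + (1 - c) * (1 + cos (real h * xs a)) / 2)"
      unfolding C1_def c_def
      by (rule sum_mono, rule pointwise) (use assms xsb A in auto)
    also have "(\<Sum>a\<in>A. c + (1 - c) * (1 + cos (real h * xs a)) / 2) = n * c + (1 - c) * (n + Ch) / 2"
      by (simp add: sum.distrib n_def Ch_def sum_divide_distrib[symmetric] sum_distrib_left[symmetric])
    finally have C1b: "C1 \<ge> n * c + (1 - c) * (n + Ch) / 2" .
    have h1: "1 \<in> {1..h}" "h \<in> {1..h}" using assms by auto
    show ?thesis
    proof (cases "Ch \<le> - T * n")
      case True
      define b where "b j = (if j = h then - 1 / c else 0)" for j :: nat
      have Fm: "cospoly h b \<in> Fam h h"
      proof -
        have "(\<Sum>j=1..h. \<bar>b j\<bar>) = 1 / cos (pi / real h)"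
          unfolding b_def using abs_single[OF h1(2), of "-1/c"] c0 by (simp add: c_def)
        thus ?thesis unfolding Fam_def by blast
      qed
      have "wF N h (cospoly h b) A = (- 1 / c) * Ch"
        unfolding wF_def cospoly_def Ch_def sum_distrib_left
      proof (rule sum.cong[OF refl])
        fix a assume "a \<in> A"
        show "(\<Sum>j=1..h. b j * cos (real j * ((real a - (real N + 1) / 2) * (2 * pi / (real h * real N)))))
             = - 1 / c * cos (real h * xs a)"
          unfolding b_def using sum_single[OF h1(2), of "- 1 / c" "\<lambda>j. cos (real j * xs a)"]
          by (simp add: xs_def)
      qed
      hence val: "wF N h (cospoly h b) A / real (card A) = (- 1 / c) * Ch / n" by (simp add: n_def)
      have "T / c \<le> (- 1 / c) * Ch / n"
        using True c0 n0 by (simp add: field_simps)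
      also have "\<dots> \<le> Sup ((\<lambda>F. wF N h F A / real (card A)) ` Fam h h)"
        unfolding val[symmetric] by (rule cSup_upper) (use Fm bdd in auto)
      finally show ?thesis .
    next
      case False
      define b where "b j = (if j = 1 then 1 / c else 0)" for j :: nat
      have Fm: "cospoly h b \<in> Fam h h"
      proof -
        have "(\<Sum>j=1..h. \<bar>b j\<bar>) = 1 / cos (pi / real h)"
          unfolding b_def using abs_single[OF h1(1), of "1/c"] c0 by (simp add: c_def)
        thus ?thesis unfolding Fam_def by blast
      qed
      have "wF N h (cospoly h b) A = (1 / c) * C1"
        unfolding wF_def cospoly_def C1_def sum_distrib_left
      proof (rule sum.cong[OF refl])
        fix a assume "a \<in> A"
        show "(\<Sum>j=1..h. b j * cos (real j * ((real a - (real N + 1) / 2) * (2 * pi / (real h * real N)))))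
             = 1 / c * cos ( xs a)"
          unfolding b_def using sum_single[OF h1(1), of "1 / c" "\<lambda>j. cos (real j * xs a)"]
          by (simp add: xs_def)
      qed
      hence val: "wF N h (cospoly h b) A / real (card A) = (1 / c) * C1 / n" by (simp add: n_def)
      have "(1 - c) * (n + Ch) / 2 \<ge> (1 - c) * (n - T * n) / 2"
        using False c1 by (intro divide_right_mono mult_left_mono) auto
      moreover have "n * c + (1 - c) * (n - T * n) / 2 = T * n"
        using c1 by (simp add: T_def field_simps)
      ultimately have "T * n \<le> C1" using C1b by linarith
      hence "T / c \<le> (1 / c) * C1 / n"
        using c0 n0 by (simp add: field_simps)
      also have "\<dots> \<le> Sup ((\<lambda>F. wF N h F A / real (card A)) ` Fam h h)"
        unfolding val[symmetric] by (rule cSup_upper) (use Fm bdd in auto)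
      finally show ?thesis .
    qed
  qed
  have fin: "finite {A. A \<subseteq> {1..N} \<and> A \<noteq> {}}" by simp
  have ne: "{A. A \<subseteq> {1..N} \<and> A \<noteq> {}} \<noteq> {}" using assms(2) by auto
  have "T / c \<le> psi N h h"
    unfolding psi_def using fin ne main by (subst Min_ge_iff) auto
  hence "(1 / c) * (4 / (3 - c) - 1) \<le> psi N h h" by (subst rhs)
  thus ?thesis unfolding c_def .
qed

end
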